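(* For every graph $G$, $\mathrm{cop}(G^+)\ge \mathrm{cop}(G)$; that is, clique substitution does not decrease the cop number.
   Context: All graphs are finite, undirected, without loops or multiple edges; $N(v)$ is the set of neighbours of $v$. Clique substitution at a vertex $v$ replaces $v$ by a clique of size $|N(v)|$ and adds a perfect matching between the vertices of this clique and $N(v)$. $G^+$ is the graph obtained from $G$ by clique substitution at every vertex: formally $V(G^+)=\bigcup_{v\in V(G)}(\{v\}\times N(v))$, and $(v_1,u_1)$, $(v_2,u_2)$ are adjacent iff $v_1=v_2$, or $v_1=u_2$ and $u_1=v_2$. Cops and Robber game on a connected graph: for an integer $k\ge 1$, the cop player places $k$ cops on (not necessarily distinct) vertices, then the robber is placed on a vertex; then, starting with the cops, the players alternate moves. In a cop move, each cop either stays or moves to an adjacent vertex; in a robber move, the robber stays or moves to an adjacent vertex. The cops win if at some point a cop and the robber occupy the same vertex. Both players have complete information. The cop number $\mathrm{cop}(G)$ of a connected graph $G$ is the smallest $k$ such that the cops have a winning strategy with $k$ cops; for a non-connected graph it is the maximum cop number of its connected components. *)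

theory Defs
  imports Main
begin

definition graph :: "'a set \<Rightarrow> ('a \<Rightarrow> 'a \<Rightarrow> bool) \<Rightarrow> bool" where
  "graph V E \<longleftrightarrow> finite V \<and> (\<forall>x y. E x y \<longrightarrow> x \<in> V \<and> y \<in> V)
     \<and> (\<forall>x y. E x y \<longrightarrow> E y x) \<and> (\<forall>x. \<not> E x x)"

definition nbrs :: "('a \<Rightarrow> 'a \<Rightarrow> bool) \<Rightarrow> 'a \<Rightarrow> 'a set" where
  "nbrs E v = {u. E v u}"

definition plus_V :: "'a set \<Rightarrow> ('a \<Rightarrow> 'a \<Rightarrow> bool) \<Rightarrow> ('a \<times> 'a) set" where
  "plus_V V E = (\<Union>v\<in>V. {v} \<times> nbrs E v)"

definition plus_E :: "'a set \<Rightarrow> ('a \<Rightarrow> 'a \<Rightarrow> bool) \<Rightarrow> ('a \<times> 'a) \<Rightarrow> ('a \<times> 'a) \<Rightarrow> bool" where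
  "plus_E V E p q \<longleftrightarrow> p \<in> plus_V V E \<and> q \<in> plus_V V E \<and> p \<noteq> q \<and>
     (fst p = fst q \<or> (fst p = snd q \<and> snd p = fst q))"

definition reach :: "'a set \<Rightarrow> ('a \<Rightarrow> 'a \<Rightarrow> bool) \<Rightarrow> 'a \<Rightarrow> 'a \<Rightarrow> bool" where
  "reach V E = (\<lambda>x y. E x y \<and> x \<in> V \<and> y \<in> V)\<^sup>*\<^sup>*"

definition components :: "'a set \<Rightarrow> ('a \<Rightarrow> 'a \<Rightarrow> bool) \<Rightarrow> 'a set set" where
  "components V E = (\<lambda>v. {u \<in> V. reach V E v u}) ` V"

definition connected_graph :: "'a set \<Rightarrow> ('a \<Rightarrow> 'a \<Rightarrow> bool) \<Rightarrow> bool" where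
  "connected_graph V E \<longleftrightarrow> V \<noteq> {} \<and> (\<forall>x\<in>V. \<forall>y\<in>V. reach V E x y)"

definition step :: "'a set \<Rightarrow> ('a \<Rightarrow> 'a \<Rightarrow> bool) \<Rightarrow> 'a \<Rightarrow> 'a \<Rightarrow> bool" where
  "step V E x y \<longleftrightarrow> y \<in> V \<and> (y = x \<or> E x y)"

text \<open>A cop configuration for k cops is a list of k (not necessarily distinct) vertices.\<close>
definition cop_step :: "'a set \<Rightarrow> ('a \<Rightarrow> 'a \<Rightarrow> bool) \<Rightarrow> 'a list \<Rightarrow> 'a list \<Rightarrow> bool" where
  "cop_step V E c c' \<longleftrightarrow> length c' = length c \<and> (\<forall>i<length c. step V E (c ! i) (c' ! i))"

text \<open>A legal robber play: r 0 is the initial placement, r (n+1) is the position after the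
  (n+1)-st robber move.\<close>
definition robber_walk :: "'a set \<Rightarrow> ('a \<Rightarrow> 'a \<Rightarrow> bool) \<Rightarrow> (nat \<Rightarrow> 'a) \<Rightarrow> bool" where
  "robber_walk V E r \<longleftrightarrow> r 0 \<in> V \<and> (\<forall>n. step V E (r n) (r (Suc n)))"

text \<open>A cop strategy (with complete information) maps the history of robber positions
  r_0,...,r_{n-1} to the cop configuration c_n (c_0 = initial placement; c_{n+1} is chosen
  after seeing r_n). Since the cops' own past moves are determined by the strategy, this
  is complete information. The cops win if some strategy makes only legal moves and
  captures every legal robber play at some finite time: either after the robber's
  placement/move (r_n on c_n) or after the following cop move (r_n on c_{n+1}).\<close>
definition cops_win :: "'a set \<Rightarrow> ('a \<Rightarrow> 'a \<Rightarrow> bool) \<Rightarrow> nat \<Rightarrow> bool" where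
  "cops_win V E k \<longleftrightarrow> (\<exists>\<sigma> :: 'a list \<Rightarrow> 'a list.
     length (\<sigma> []) = k \<and> set (\<sigma> []) \<subseteq> V \<and>
     (\<forall>r. robber_walk V E r \<longrightarrow>
        (\<forall>n. cop_step V E (\<sigma> (map r [0..<n])) (\<sigma> (map r [0..<Suc n]))) \<and>
        (\<exists>n. r n \<in> set (\<sigma> (map r [0..<n])) \<or> r n \<in> set (\<sigma> (map r [0..<Suc n])))))"

definition cop_number_conn :: "'a set \<Rightarrow> ('a \<Rightarrow> 'a \<Rightarrow> bool) \<Rightarrow> nat" where
  "cop_number_conn V E = (LEAST k. 1 \<le> k \<and> cops_win V E k)"

definition cop_number :: "'a set \<Rightarrow> ('a \<Rightarrow> 'a \<Rightarrow> bool) \<Rightarrow> nat" where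
  "cop_number V E =
     (if connected_graph V E then cop_number_conn V E
      else Max ((\<lambda>C. cop_number_conn C E) ` components V E))"

end

theory Submission imports Defs begin

lemma reach_sym:
  assumes sym: "\<forall>x y. E x y \<longrightarrow> E y x" and r: "reach V E x y"
  shows "reach V E y x"
  using r unfolding reach_def
proof (induction rule: rtranclp_induct)
  case base then show ?case by simp
next
  case (step y z)
  then show ?case using sym by (metis (mono_tags, lifting) converse_rtranclp_into_rtranclp)
qed

lemma reach_closed:
  assumes "reach W F x y" "x \<in> S" "\<And>a b. a \<in> S \<Longrightarrow> F a b \<Longrightarrow> a \<in> W \<Longrightarrow> b \<in> W \<Longrightarrow> b \<in> S"
  shows "y \<in> S"
  using assms(1) unfolding reach_def
  by (induction rule: rtranclp_induct) (use assms in auto)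

lemma reach_edge: "F x y \<Longrightarrow> x \<in> W \<Longrightarrow> y \<in> W \<Longrightarrow> reach W F x y"
  unfolding reach_def by auto

lemma reach_trans: "reach W F x y \<Longrightarrow> reach W F y z \<Longrightarrow> reach W F x z"
  unfolding reach_def by auto

lemma cop_step_refl: "set c \<subseteq> V \<Longrightarrow> cop_step V E c c"
  unfolding cop_step_def step_def by auto

lemma cops_win_card:
  assumes "finite C" shows "cops_win C E (card C)"
proof -
  obtain xs where xs: "set xs = C" "distinct xs" using finite_distinct_list[OF assms] by blast
  show ?thesis unfolding cops_win_def
    apply (rule exI[of _ "\<lambda>_. xs"])
    using xs distinct_card[OF xs(2)] by (auto simp: cop_step_def step_def robber_walk_def intro!: exI[of _ 0])
qed

lemma conn_ge1:
  assumes "finite C" "C \<noteq> {}" shows "1 \<le> cop_number_conn C E"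
proof -
  have "1 \<le> card C \<and> cops_win C E (card C)" using assms cops_win_card
    by (simp add: Suc_leI card_gt_0_iff)
  then show ?thesis unfolding cop_number_conn_def by (metis (mono_tags, lifting) LeastI)
qed

lemma conn_single: "cop_number_conn {x} E \<le> 1"
  unfolding cop_number_conn_def
  using cops_win_card[of "{x}" E] by (intro Least_le) simp

lemma conn_mono:
  assumes "\<And>k. cops_win D F k \<Longrightarrow> cops_win C E k" "finite D" "D \<noteq> {}"
  shows "cop_number_conn C E \<le> cop_number_conn D F"
proof -
  have ex: "1 \<le> card D \<and> cops_win D F (card D)" using assms cops_win_card
    by (simp add: Suc_leI card_gt_0_iff)
  let ?K = "cop_number_conn D F"
  have "1 \<le> ?K \<and> cops_win D F ?K" unfolding cop_number_conn_def using ex by (rule LeastI[where P="\<lambda>k. 1 \<le> k \<and> cops_win D F k"])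
  then have "1 \<le> ?K \<and> cops_win C E ?K" using assms(1) by blast
  then show ?thesis unfolding cop_number_conn_def[of C] by (rule Least_le)
qed

definition capt :: "('b list \<Rightarrow> 'b list) \<Rightarrow> 'b list \<Rightarrow> nat \<Rightarrow> bool" where
  "capt \<sigma> h m \<longleftrightarrow> h!m \<in> set (\<sigma> (take m h)) \<or> h!m \<in> set (\<sigma> (take (Suc m) h))"

definition frz :: "('b list \<Rightarrow> 'b list) \<Rightarrow> 'b list \<Rightarrow> 'b list" where
  "frz \<sigma> h = (if \<exists>m<length h. capt \<sigma> h m then
     (let m = LEAST m. capt \<sigma> h m in
       if h!m \<in> set (\<sigma> (take m h)) then \<sigma> (take m h) else \<sigma> (take (Suc m) h))
   else \<sigma> h)"

lemma take_map_upt: "m \<le> n \<Longrightarrow> take m (map R [0..<n]) = map R [0..<m]"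
  by (simp add: take_map)

lemma strat_in_W:
  assumes "set (\<sigma> []) \<subseteq> W" "\<forall>n. cop_step W F (\<sigma> (map R [0..<n])) (\<sigma> (map R [0..<Suc n]))"
  shows "set (\<sigma> (map R [0..<n])) \<subseteq> W"
proof (induction n)
  case 0 then show ?case using assms by simp
next
  case (Suc n)
  show ?case using assms(2)[rule_format, of n]
    by (auto simp: cop_step_def step_def in_set_conv_nth)
qed

lemma freeze:
  assumes "cops_win W F k"
  shows "\<exists>\<sigma>. length (\<sigma> []) = k \<and> set (\<sigma> []) \<subseteq> W \<and>
     (\<forall>R. robber_walk W F R \<longrightarrow>
        (\<forall>n. cop_step W F (\<sigma> (map R [0..<n])) (\<sigma> (map R [0..<Suc n]))) \<and>
        (\<exists>m. R m \<in> set (\<sigma> (map R [0..<Suc m])) \<and>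
             (\<forall>t>m. \<sigma> (map R [0..<t]) = \<sigma> (map R [0..<Suc m]))))"
proof -
  obtain \<sigma> where s0: "length (\<sigma> []) = k" "set (\<sigma> []) \<subseteq> W" and
    sw: "\<And>R. robber_walk W F R \<Longrightarrow>
        (\<forall>n. cop_step W F (\<sigma> (map R [0..<n])) (\<sigma> (map R [0..<Suc n]))) \<and>
        (\<exists>n. R n \<in> set (\<sigma> (map R [0..<n])) \<or> R n \<in> set (\<sigma> (map R [0..<Suc n])))"
    using assms unfolding cops_win_def by blast
  have f0: "frz \<sigma> [] = \<sigma> []" by (simp add: frz_def)
  have main: "(\<forall>n. cop_step W F (frz \<sigma> (map R [0..<n])) (frz \<sigma> (map R [0..<Suc n]))) \<and>
        (\<exists>m. R m \<in> set (frz \<sigma> (map R [0..<Suc m])) \<and>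
             (\<forall>t>m. frz \<sigma> (map R [0..<t]) = frz \<sigma> (map R [0..<Suc m])))"
    if rw: "robber_walk W F R" for R
  proof -
    define Cap where "Cap m \<longleftrightarrow> R m \<in> set (\<sigma> (map R [0..<m])) \<or> R m \<in> set (\<sigma> (map R [0..<Suc m]))" for m
    have legal: "\<forall>n. cop_step W F (\<sigma> (map R [0..<n])) (\<sigma> (map R [0..<Suc n]))" using sw[OF rw] by blast
    have "\<exists>m. Cap m" using sw[OF rw] unfolding Cap_def by blast
    define m0 where "m0 = (LEAST m. Cap m)"
    have cm0: "Cap m0" unfolding m0_def using \<open>\<exists>m. Cap m\<close> by (metis LeastI)
    have nc: "\<not> Cap m" if "m < m0" for m using that unfolding m0_def using not_less_Least by blast
    have capt_eq: "capt \<sigma> (map R [0..<n]) m \<longleftrightarrow> Cap m" if "m < n" for m n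
      using that unfolding capt_def Cap_def by (simp add: take_map_upt)
    define FF where "FF = (if R m0 \<in> set (\<sigma> (map R [0..<m0])) then \<sigma> (map R [0..<m0]) else \<sigma> (map R [0..<Suc m0]))"
    have low: "frz \<sigma> (map R [0..<n]) = \<sigma> (map R [0..<n])" if "n \<le> m0" for n
    proof -
      have "\<not> (\<exists>m<length (map R [0..<n]). capt \<sigma> (map R [0..<n]) m)"
        using capt_eq nc that by auto
      then show ?thesis unfolding frz_def by metis
    qed
    have high: "frz \<sigma> (map R [0..<n]) = FF" if "m0 < n" for n
    proof -
      have ex: "\<exists>m<length (map R [0..<n]). capt \<sigma> (map R [0..<n]) m"
        using capt_eq cm0 that by auto
      have L: "(LEAST m. capt \<sigma> (map R [0..<n]) m) = m0"
      proof (rule Least_equality)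
        show "capt \<sigma> (map R [0..<n]) m0" using capt_eq cm0 that by auto
        show "m0 \<le> y" if "capt \<sigma> (map R [0..<n]) y" for y
        proof (rule ccontr)
          assume "\<not> m0 \<le> y"
          then have "y < m0" by simp
          then show False using capt_eq[of y n] that nc[of y] \<open>m0 < n\<close> by auto
        qed
      qed
      show ?thesis unfolding frz_def using ex L that
        by (simp add: FF_def take_map_upt Let_def)
    qed
    have inW: "set (\<sigma> (map R [0..<n])) \<subseteq> W" for n using strat_in_W[OF s0(2) legal] .
    have FFin: "R m0 \<in> set FF" using cm0 unfolding FF_def Cap_def by auto
    have A: "cop_step W F (frz \<sigma> (map R [0..<n])) (frz \<sigma> (map R [0..<Suc n]))" for n
    proof (cases "Suc n \<le> m0")
      case True then show ?thesis using low[of n] low[of "Suc n"] legal by (simp del: upt_Suc)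
    next
      case False
      show ?thesis
      proof (cases "n = m0")
        case True
        then show ?thesis using low[of n] high[of "Suc n"] legal cop_step_refl[OF inW[of m0]]
          by (simp add: FF_def)
      next
        case False
        then have "m0 < n" using \<open>\<not> Suc n \<le> m0\<close> by simp
        have "set FF \<subseteq> W" unfolding FF_def using inW[of m0] inW[of "Suc m0"] by simp
        then show ?thesis using high[of n] high[of "Suc n"] \<open>m0 < n\<close> cop_step_refl
          by (simp del: upt_Suc)
      qed
    qed
    show ?thesis using A high FFin by (intro conjI allI exI[of _ m0]) (auto simp del: upt_Suc)
  qed
  show ?thesis
    apply (rule exI[of _ "frz \<sigma>"])
    using f0 s0 main by simp
qed


lemma plus_V_eq: "plus_V V E = {p. fst p \<in> V \<and> E (fst p) (snd p)}"
  by (auto simp: plus_V_def nbrs_def)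

primrec Sh :: "('a \<Rightarrow> 'a) \<Rightarrow> (nat \<Rightarrow> 'a) \<Rightarrow> nat \<Rightarrow> ('a \<times> 'a) \<times> ('a \<times> 'a)" where
  "Sh nb r 0 = ((r 0, nb (r 0)), (r 0, nb (r 0)))"
| "Sh nb r (Suc j) = (if r (Suc j) \<noteq> r j then ((r j, r (Suc j)), (r (Suc j), r j))
     else (snd (Sh nb r j), snd (Sh nb r j)))"

definition Rw :: "('a \<Rightarrow> 'a) \<Rightarrow> (nat \<Rightarrow> 'a) \<Rightarrow> nat \<Rightarrow> 'a \<times> 'a" where
  "Rw nb r m = (if even m then fst (Sh nb r (m div 2)) else snd (Sh nb r (m div 2)))"

definition shl :: "('a \<Rightarrow> 'a) \<Rightarrow> 'a list \<Rightarrow> ('a \<times> 'a) list" where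
  "shl nb h = map (Rw nb (\<lambda>i. h!i)) [0..<2 * length h]"

lemma Sh_cong: "(\<And>i. i \<le> j \<Longrightarrow> r i = r' i) \<Longrightarrow> Sh nb r j = Sh nb r' j"
  by (induction j) auto

lemma Rw_even: "Rw nb r (2*j) = fst (Sh nb r j)" by (simp add: Rw_def)
lemma Rw_odd: "Rw nb r (Suc (2*j)) = snd (Sh nb r j)" by (simp add: Rw_def)

lemma shl_map: "shl nb (map r [0..<n]) = map (Rw nb r) [0..<2*n]"
proof -
  have "Rw nb (\<lambda>i. map r [0..<n] ! i) m = Rw nb r m" if "m < 2*n" for m
  proof -
    have "Sh nb (\<lambda>i. map r [0..<n] ! i) (m div 2) = Sh nb r (m div 2)"
      by (rule Sh_cong) (use that in auto)
    then show ?thesis by (simp add: Rw_def)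
  qed
  then show ?thesis unfolding shl_def by simp
qed

lemma two_steps:
  assumes "step D (plus_E V E) x y" "step D (plus_E V E) y z"
    and D: "\<And>p. p \<in> D \<Longrightarrow> fst p \<in> C \<and> E (fst p) (snd p)"
  shows "step C E (fst x) (fst z)"
  using assms unfolding step_def plus_E_def plus_V_eq by (cases x, cases y, cases z) auto

lemma sim:
  assumes g: "graph V E" and CV: "C \<subseteq> V" and clos: "\<And>x y. x \<in> C \<Longrightarrow> E x y \<Longrightarrow> y \<in> C"
    and hasnb: "\<And>x. x \<in> C \<Longrightarrow> \<exists>y. E x y"
    and Ddef: "D = {p. fst p \<in> C \<and> E (fst p) (snd p)}"
    and win: "cops_win D (plus_E V E) k"
  shows "cops_win C E k"
proof -
  let ?F = "plus_E V E"
  have sym: "\<And>x y. E x y \<Longrightarrow> E y x" and irr: "\<And>x. \<not> E x x"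
    and EV: "\<And>x y. E x y \<Longrightarrow> x \<in> V \<and> y \<in> V" using g unfolding graph_def by auto
  obtain \<sigma> where s0: "length (\<sigma> []) = k" "set (\<sigma> []) \<subseteq> D" and
    sw: "\<And>R. robber_walk D ?F R \<Longrightarrow>
        (\<forall>n. cop_step D ?F (\<sigma> (map R [0..<n])) (\<sigma> (map R [0..<Suc n]))) \<and>
        (\<exists>m. R m \<in> set (\<sigma> (map R [0..<Suc m])) \<and>
             (\<forall>t>m. \<sigma> (map R [0..<t]) = \<sigma> (map R [0..<Suc m])))"
    using freeze[OF win] by blast
  define nb where "nb x = (SOME y. E x y)" for x
  have nbE: "E x (nb x)" if "x \<in> C" for x unfolding nb_def using hasnb[OF that] by (rule someI_ex)
  define \<tau> where "\<tau> h = map fst (\<sigma> (shl nb h))" for h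
  have Dsub: "\<And>p. p \<in> D \<Longrightarrow> fst p \<in> C \<and> E (fst p) (snd p)" using Ddef by auto
  have FE: "?F p q" if "p \<in> D" "q \<in> D" "p \<noteq> q" "fst p = fst q \<or> (fst p = snd q \<and> snd p = fst q)" for p q
    using that CV unfolding plus_E_def plus_V_eq Ddef by auto
  have game: "(\<forall>n. cop_step C E (\<tau> (map r [0..<n])) (\<tau> (map r [0..<Suc n]))) \<and>
        (\<exists>n. r n \<in> set (\<tau> (map r [0..<n])) \<or> r n \<in> set (\<tau> (map r [0..<Suc n])))"
    if rw: "robber_walk C E r" for r
  proof -
    have rC: "r j \<in> C" for j
      using rw by (induction j) (auto simp: robber_walk_def step_def)
    have rs: "r (Suc j) = r j \<or> E (r j) (r (Suc j))" for j
      using rw by (auto simp: robber_walk_def step_def)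
    have fs: "fst (snd (Sh nb r j)) = r j" for j by (induction j) auto
    have inD: "fst (Sh nb r j) \<in> D \<and> snd (Sh nb r j) \<in> D" for j
    proof (induction j)
      case 0 then show ?case using nbE[OF rC[of 0]] rC[of 0] Ddef by simp
    next
      case (Suc j)
      then show ?case using rs[of j] rC[of j] rC[of "Suc j"] sym Ddef by auto
    qed
    define R where "R = Rw nb r"
    have RD: "R m \<in> D" for m using inD unfolding R_def Rw_def by auto
    have Rstep: "step D ?F (R m) (R (Suc m))" for m
    proof -
      obtain j where "m = 2*j \<or> m = Suc (2*j)" by (metis oddE evenE add.commute plus_1_eq_Suc)
      then show ?thesis
      proof
        assume m: "m = 2*j"
        show ?thesis
        proof (cases j)
          case 0 then show ?thesis using m inD[of 0] unfolding R_def step_def Rw_def by simp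
        next
          case (Suc j')
          have a: "R m = fst (Sh nb r j)" "R (Suc m) = snd (Sh nb r j)"
            unfolding R_def m Rw_even Rw_odd by simp_all
          show ?thesis
          proof (cases "r j \<noteq> r j'")
            case True
            then have "R m = (r j', r j)" "R (Suc m) = (r j, r j')" using a Suc by simp_all
            then show ?thesis using True RD[of "Suc m"] RD[of m] FE[of "R m" "R (Suc m)"]
              unfolding step_def by auto
          next
            case False
            then have "R m = R (Suc m)" using a Suc by simp
            then show ?thesis using RD[of "Suc m"] unfolding step_def by auto
          qed
        qed
      next
        assume m: "m = Suc (2*j)"
        have e: "Suc m = 2 * Suc j" using m by simp
        have a: "R m = snd (Sh nb r j)" "R (Suc m) = fst (Sh nb r (Suc j))"
          unfolding R_def m Rw_odd by (simp_all only: e[unfolded m] Rw_even)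
        show ?thesis using RD[of "Suc m"] RD[of m] fs[of j] a
            FE[of "R m" "R (Suc m)"]
          unfolding step_def by (metis (no_types, lifting) Sh.simps(2) prod.collapse prod.sel(1) prod.sel(2))
      qed
    qed
    have Rwalk: "robber_walk D ?F R" using RD Rstep unfolding robber_walk_def by auto
    define CC where "CC n = \<sigma> (map R [0..<n])" for n
    have tau: "\<tau> (map r [0..<n]) = map fst (CC (2*n))" for n
      unfolding \<tau>_def CC_def R_def shl_map ..
    from sw[OF Rwalk] have legal: "\<And>n. cop_step D ?F (CC n) (CC (Suc n))"
      and capt: "\<exists>m. R m \<in> set (CC (Suc m)) \<and> (\<forall>t>m. CC t = CC (Suc m))"
      unfolding CC_def by auto
    have L: "cop_step C E (\<tau> (map r [0..<n])) (\<tau> (map r [0..<Suc n]))" for n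
    proof -
      have l1: "length (CC (Suc (2 * n))) = length (CC (2 * n))"
        "\<forall>i<length (CC (2 * n)). step D ?F (CC (2 * n) ! i) (CC (Suc (2 * n)) ! i)"
        "length (CC (Suc (Suc (2 * n)))) = length (CC (Suc (2 * n)))"
        "\<forall>i<length (CC (Suc (2 * n))). step D ?F (CC (Suc (2 * n)) ! i) (CC (Suc (Suc (2 * n))) ! i)"
        using legal[of "2*n"] legal[of "Suc (2*n)"] unfolding cop_step_def by auto
      have "step C E (fst (CC (2 * n) ! i)) (fst (CC (Suc (Suc (2 * n))) ! i))"
        if "i < length (CC (2 * n))" for i
        using l1 that two_steps[where D=D and C=C and E=E and V=V and x="CC (2 * n) ! i" and y="CC (Suc (2 * n)) ! i" and z="CC (Suc (Suc (2 * n))) ! i", OF _ _ Dsub] by auto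
      then show ?thesis unfolding tau cop_step_def using l1 by simp
    qed
    obtain m where m1: "R m \<in> set (CC (Suc m))" and m2: "\<forall>t>m. CC t = CC (Suc m)" using capt by blast
    have inC: "fst p \<in> set (\<tau> (map r [0..<n]))" if "p \<in> set (CC (2*n))" for p n
      using that unfolding tau by auto
    obtain j where "m = 2*j \<or> m = Suc (2*j)" by (metis oddE evenE add.commute plus_1_eq_Suc)
    then have "\<exists>n. r n \<in> set (\<tau> (map r [0..<n])) \<or> r n \<in> set (\<tau> (map r [0..<Suc n]))"
    proof
      assume m: "m = Suc (2*j)"
      have "R m \<in> set (CC (2 * Suc j))" using m1 m by simp
      moreover have "fst (R m) = r j" using fs[of j] m unfolding R_def by (simp add: Rw_odd)
      ultimately have "r j \<in> set (\<tau> (map r [0..<Suc j]))" using inC by metis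
      then show ?thesis by blast
    next
      assume m: "m = 2*j"
      have "CC (2 * Suc j) = CC (Suc m)" using m2 m by (metis lessI less_Suc_eq mult_Suc_right add_2_eq_Suc)
      then have c2: "R m \<in> set (CC (2 * Suc j))" using m1 by simp
      show ?thesis
      proof (cases j)
        case 0
        then have "r 0 \<in> set (\<tau> (map r [0..<Suc 0]))" using inC[OF c2] m unfolding R_def
          by (simp add: Rw_def)
        then show ?thesis by blast
      next
        case (Suc j')
        have Re: "R m = fst (Sh nb r (Suc j'))" using m Suc unfolding R_def by (simp only: Rw_even)
        show ?thesis
        proof (cases "r j \<noteq> r j'")
          case False
          then have "fst (R m) = r j" using Re Suc fs[of j'] by simp
          then have "r j \<in> set (\<tau> (map r [0..<Suc j]))" using inC[OF c2] by metis
          then show ?thesis by blast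
        next
          case True
          then have Rm: "R m = (r j', r j)" using Re Suc by simp
          from m1 obtain i where i: "i < length (CC (Suc m))" "CC (Suc m) ! i = R m"
            by (auto simp: in_set_conv_nth)
          have st: "step D ?F (CC m ! i) (R m)" and li: "i < length (CC m)"
            using legal[of m] i unfolding cop_step_def by auto
          have "fst (CC m ! i) = r j' \<or> fst (CC m ! i) = r j"
            using st Rm unfolding step_def plus_E_def by (metis fst_conv snd_conv)
          moreover have "fst (CC m ! i) \<in> set (\<tau> (map r [0..<j]))"
            using li m inC[of "CC m ! i" j] by simp
          ultimately show ?thesis using Suc by (metis (no_types, lifting))
        qed
      qed
    qed
    then show ?thesis using L by blast
  qed
  show ?thesis unfolding cops_win_def
    apply (rule exI[of _ \<tau>])
    using s0 game Dsub unfolding \<tau>_def shl_def by auto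
qed


lemma comps_finite: "finite W \<Longrightarrow> finite (components W F)"
  unfolding components_def by simp

lemma cop_number_ge1:
  assumes "finite W" "W \<noteq> {}" shows "1 \<le> cop_number W F"
proof (cases "connected_graph W F")
  case True then show ?thesis using conn_ge1 assms by (simp add: cop_number_def)
next
  case False
  obtain w where w: "w \<in> W" using assms by blast
  let ?K = "{u \<in> W. reach W F w u}"
  have K: "?K \<in> components W F" using w unfolding components_def by blast
  have "w \<in> ?K" using w by (simp add: reach_def)
  then have "1 \<le> cop_number_conn ?K F" using assms by (intro conn_ge1) auto
  also have "\<dots> \<le> Max ((\<lambda>C. cop_number_conn C F) ` components W F)"
    using K comps_finite[OF assms(1)] by (intro Max_ge) auto
  finally show ?thesis using False by (simp add: cop_number_def)
qed

lemma good_le: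
  assumes g: "graph V E" and ex: "\<exists>x y. E x y"
    and CV: "C \<subseteq> V" and Cne: "C \<noteq> {}" and clos: "\<And>x y. x \<in> C \<Longrightarrow> E x y \<Longrightarrow> y \<in> C"
    and conn: "\<forall>x\<in>C. \<forall>y\<in>C. reach V E x y"
  shows "cop_number_conn C E \<le> cop_number (plus_V V E) (plus_E V E)"
proof -
  let ?W = "plus_V V E" and ?F = "plus_E V E"
  have sym: "\<And>x y. E x y \<Longrightarrow> E y x" and irr: "\<And>x. \<not> E x x"
    and EV: "\<And>x y. E x y \<Longrightarrow> x \<in> V \<and> y \<in> V" and fin: "finite V"
    using g unfolding graph_def by auto
  have Wfin: "finite ?W"
    by (rule finite_subset[of _ "V \<times> V"]) (use EV fin in \<open>auto simp: plus_V_eq\<close>)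
  have Wne: "?W \<noteq> {}" using ex EV by (auto simp: plus_V_eq)
  show ?thesis
  proof (cases "\<exists>x\<in>C. \<not> (\<exists>y. E x y)")
    case True
    then obtain x where x: "x \<in> C" "\<And>y. \<not> E x y" by blast
    have "C = {x}"
    proof -
      have "y = x" if "y \<in> C" for y
      proof -
        have "reach V E x y" using conn x that by blast
        then show ?thesis unfolding reach_def
          by (cases rule: converse_rtranclpE) (use x in auto)
      qed
      then show ?thesis using x by blast
    qed
    then have "cop_number_conn C E \<le> 1" using conn_single by simp
    also have "1 \<le> cop_number ?W ?F" using cop_number_ge1[OF Wfin Wne] .
    finally show ?thesis .
  next
    case False
    then have hasnb: "\<And>x. x \<in> C \<Longrightarrow> \<exists>y. E x y" by blast
    define D where "D = {p. fst p \<in> C \<and> E (fst p) (snd p)}"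
    have DW: "D \<subseteq> ?W" using CV unfolding D_def plus_V_eq by auto
    have Dfin: "finite D" using DW Wfin finite_subset by blast
    obtain c where c: "c \<in> C" using Cne by blast
    obtain u where u: "E c u" using hasnb[OF c] by blast
    have cu: "(c, u) \<in> D" using c u D_def by simp
    have Dne: "D \<noteq> {}" using cu by blast
    have le1: "cop_number_conn C E \<le> cop_number_conn D ?F"
      by (rule conn_mono[OF _ Dfin Dne], rule sim[OF g CV clos hasnb D_def])
    have Dclos: "b \<in> D" if "a \<in> D" "?F a b" "a \<in> ?W" "b \<in> ?W" for a b
      using that clos unfolding D_def plus_E_def plus_V_eq by auto
    have lift: "\<forall>u'. E v' u' \<longrightarrow> reach ?W ?F (v, u0) (v', u')"
      if "reach V E v v'" "v \<in> C" "E v u0" for v v' u0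
      using that(1) unfolding reach_def[of V E]
    proof (induction rule: rtranclp_induct)
      case base
      show ?case
      proof (intro allI impI)
        fix u' assume "E v u'"
        show "reach ?W ?F (v, u0) (v, u')"
        proof (cases "u' = u0")
          case True then show ?thesis by (simp add: reach_def)
        next
          case False
          then show ?thesis using \<open>E v u'\<close> that(2,3) CV
            by (intro reach_edge) (auto simp: plus_E_def plus_V_eq)
        qed
      qed
    next
      case (step x y)
      show ?case
      proof (intro allI impI)
        fix u' assume yu: "E y u'"
        have "E x y" "x \<in> V" "y \<in> V" using step(2) by auto
        have r1: "reach ?W ?F (v, u0) (x, y)" using step(3) \<open>E x y\<close> by blast
        have r2: "reach ?W ?F (x, y) (y, x)"
          using \<open>E x y\<close> sym[OF \<open>E x y\<close>] EV irr[of x]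
          by (intro reach_edge) (auto simp: plus_E_def plus_V_eq)
        have r3: "reach ?W ?F (y, x) (y, u')"
        proof (cases "u' = x")
          case True then show ?thesis by (simp add: reach_def)
        next
          case False
          then show ?thesis using yu sym[OF \<open>E x y\<close>] EV
            by (intro reach_edge) (auto simp: plus_E_def plus_V_eq)
        qed
        show "reach ?W ?F (v, u0) (y, u')" using r1 r2 r3 reach_trans by metis
      qed
    qed
    have Dconn: "reach ?W ?F p q" if "p \<in> D" "q \<in> D" for p q
    proof -
      obtain v u0 where p: "p = (v, u0)" by (cases p)
      obtain v' u' where q: "q = (v', u')" by (cases q)
      have "v \<in> C" "E v u0" "v' \<in> C" "E v' u'" using that p q D_def by auto
      then show ?thesis using lift[of v v' u0] conn p q by blast
    qed
    have le2: "cop_number_conn D ?F \<le> cop_number ?W ?F"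
    proof (cases "connected_graph ?W ?F")
      case True
      have "D = ?W"
      proof
        show "?W \<subseteq> D"
        proof
          fix w assume "w \<in> ?W"
          then have "reach ?W ?F (c, u) w" using True cu DW unfolding connected_graph_def by blast
          then show "w \<in> D" using reach_closed[OF _ cu, of ?W ?F w] Dclos by blast
        qed
      qed (rule DW)
      then show ?thesis using True by (simp add: cop_number_def)
    next
      case False
      have "D = {w \<in> ?W. reach ?W ?F (c, u) w}"
      proof
        show "{w \<in> ?W. reach ?W ?F (c, u) w} \<subseteq> D"
          using reach_closed[OF _ cu, of ?W ?F] Dclos by blast
        show "D \<subseteq> {w \<in> ?W. reach ?W ?F (c, u) w}" using DW Dconn cu by blast
      qed
      then have "D \<in> components ?W ?F" using cu DW unfolding components_def by blast
      then have "cop_number_conn D ?F \<le> Max ((\<lambda>C. cop_number_conn C ?F) ` components ?W ?F)"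
        using comps_finite[OF Wfin] by (intro Max_ge) auto
      then show ?thesis using False by (simp add: cop_number_def)
    qed
    show ?thesis using le1 le2 by simp
  qed
qed

theorem lemma7:
  fixes V :: "'a set" and E :: "'a \<Rightarrow> 'a \<Rightarrow> bool"
  assumes "graph V E"
    and "\<exists>x y. E x y"
  shows "cop_number (plus_V V E) (plus_E V E) \<ge> cop_number V E"
proof -
  have sym: "\<And>x y. E x y \<Longrightarrow> E y x" and EV: "\<And>x y. E x y \<Longrightarrow> x \<in> V \<and> y \<in> V"
    and fin: "finite V"
    using assms(1) unfolding graph_def by auto
  have Vne: "V \<noteq> {}" using assms(2) EV by blast
  show ?thesis
  proof (cases "connected_graph V E")
    case True
    have "cop_number_conn V E \<le> cop_number (plus_V V E) (plus_E V E)"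
      using True EV unfolding connected_graph_def by (intro good_le[OF assms]) auto
    then show ?thesis using True by (simp add: cop_number_def)
  next
    case False
    have cf: "finite (components V E)" "components V E \<noteq> {}"
      using comps_finite[OF fin] Vne unfolding components_def by auto
    obtain K where K: "K \<in> components V E"
      "Max ((\<lambda>C. cop_number_conn C E) ` components V E) = cop_number_conn K E"
    proof -
      have "Max ((\<lambda>C. cop_number_conn C E) ` components V E) \<in> (\<lambda>C. cop_number_conn C E) ` components V E"
        using cf by (intro Max_in) auto
      then show ?thesis using that by blast
    qed
    obtain c where c: "c \<in> V" "K = {u \<in> V. reach V E c u}" using K(1) unfolding components_def by blast
    have cK: "c \<in> K" using c by (simp add: reach_def)
    have "cop_number_conn K E \<le> cop_number (plus_V V E) (plus_E V E)"
    proof (rule good_le[OF assms])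
      show "K \<subseteq> V" "K \<noteq> {}" using c cK by auto
      show "y \<in> K" if "x \<in> K" "E x y" for x y
      proof -
        have "reach V E c x" "x \<in> V" "y \<in> V" using that c EV by auto
        then have "reach V E c y" using \<open>E x y\<close> reach_trans reach_edge by metis
        then show ?thesis using c \<open>y \<in> V\<close> by simp
      qed
      show "\<forall>x\<in>K. \<forall>y\<in>K. reach V E x y"
      proof (intro ballI)
        fix x y assume "x \<in> K" "y \<in> K"
        then have "reach V E c x" "reach V E c y" using c by auto
        moreover have "\<forall>x y. E x y \<longrightarrow> E y x" using sym by blast
        ultimately have "reach V E x c" "reach V E c y" using reach_sym by metis+
        then show "reach V E x y" by (rule reach_trans)
      qed
    qed
    then show ?thesis using False K(2) by (simp add: cop_number_def)
  qed
qed

end
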